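(* Let $K>0$, let $m_1,m_2\in(0,1]$, and let $f,g:[0,K]\to\mathbb{R}$ be such that $f$ is $m_1$-convex and $g$ is $m_2$-convex on $[0,K]$. Let $0\le a<b\le K$ with $a/m_1\le K$ and $a/m_2\le K$, and assume $f$, $g$ and $fg$ are integrable on $[a,b]$. Then \begin{align*} &\frac{g(b)}{(b-a)^2}\int_a^b (x-a)f(x)\,dx+m_2\frac{g(a/m_2)}{(b-a)^2}\int_a^b (b-x)f(x)\,dx\\ &\quad+\frac{f(b)}{(b-a)^2}\int_a^b (x-a)g(x)\,dx+m_1\frac{f(a/m_1)}{(b-a)^2}\int_a^b (b-x)g(x)\,dx\\ &\le \frac{1}{b-a}\int_a^b f(x)g(x)\,dx+\frac13 f(b)g(b)+\frac{m_1}{6}f\!\left(\frac{a}{m_1}\right)g(b)+\frac{m_2}{6}f(b)\,g\!\left(\frac{a}{m_2}\right)+\frac{m_1m_2}{3}f\!\left(\frac{a}{m_1}\right)g\!\left(\frac{a}{m_2}\right). \end{align*}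
   Context: For $m\in[0,1]$ and $K>0$, a function $h:[0,K]\to\mathbb{R}$ is called $m$-convex if $h(tx+m(1-t)y)\le t\,h(x)+m(1-t)\,h(y)$ for all $x,y\in[0,K]$ and $t\in[0,1]$. *)

theory Defs
  imports "HOL-Analysis.Analysis"
begin

definition m_convex_on :: "real \<Rightarrow> real \<Rightarrow> (real \<Rightarrow> real) \<Rightarrow> bool" where
  "m_convex_on m K h \<longleftrightarrow>
     (\<forall>x\<in>{0..K}. \<forall>y\<in>{0..K}. \<forall>t\<in>{0..1}.
        h (t * x + m * (1 - t) * y) \<le> t * h x + m * (1 - t) * h y)"

end

theory Submission
  imports Defs
begin

lemma affine_prod_int:
  fixes h :: "real \<Rightarrow> real"
  assumes "h absolutely_integrable_on {a..b}"
  shows "(\<lambda>x. (c * x + d) * h x) integrable_on {a..b}"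
proof -
  have "(\<lambda>x. c * x + d) \<in> borel_measurable (lebesgue_on {a..b})"
    by (intro continuous_imp_measurable_on_sets_lebesgue) (auto intro!: continuous_intros)
  moreover have "bounded ((\<lambda>x. c * x + d) ` {a..b})"
    by (intro compact_imp_bounded compact_continuous_image) (auto intro!: continuous_intros)
  ultimately have "(\<lambda>x. (c * x + d) * h x) absolutely_integrable_on {a..b}"
    using assms by (intro absolutely_integrable_bounded_measurable_product_real) auto
  then show ?thesis using set_lebesgue_integral_eq_integral(1) by blast
qed

lemma mconv_pt:
  assumes "m_convex_on m K f" "m \<in> {0<..1}" "0 \<le> a" "a < b" "b \<le> K" "a / m \<le> K"
    and x: "x \<in> {a..b}"
  shows "f x \<le> (x - a) / (b - a) * f b + m * (1 - (x - a) / (b - a)) * f (a / m)"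
proof -
  define t where "t = (x - a) / (b - a)"
  have t: "t \<in> {0..1}" using x assms by (auto simp: t_def field_simps)
  have "0 \<le> a / m" using assms by auto
  have eq: "t * b + m * (1 - t) * (a / m) = x"
  proof -
    have "m * (1 - t) * (a / m) = (1 - t) * a" using assms by simp
    moreover have "t * b + (1 - t) * a = x"
    proof -
      have ne: "b - a \<noteq> 0" using assms by simp
      have "t * b + (1 - t) * a = a + t * (b - a)" by (simp add: algebra_simps)
      also have "t * (b - a) = x - a" using ne unfolding t_def by simp
      finally show ?thesis by simp
    qed
    ultimately show ?thesis by simp
  qed
  have "f (t * b + m * (1 - t) * (a / m)) \<le> t * f b + m * (1 - t) * f (a / m)"
  proof -
    have "b \<in> {0..K}" "a / m \<in> {0..K}" using assms \<open>0 \<le> a / m\<close> by auto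
    then show ?thesis using assms(1) t unfolding m_convex_on_def by blast
  qed
  then show ?thesis using eq t_def by simp
qed

lemma abs_int_of_bound:
  fixes h :: "real \<Rightarrow> real"
  assumes "h integrable_on {a..b}" and "\<And>x. x \<in> {a..b} \<Longrightarrow> h x \<le> c * x + d"
  shows "h absolutely_integrable_on {a..b}"
proof -
  have C: "(\<lambda>x. c * x + d) absolutely_integrable_on {a..b}"
    by (intro absolutely_integrable_continuous_real) (auto intro!: continuous_intros)
  then have "(\<lambda>x. c * x + d) integrable_on {a..b}"
    using set_lebesgue_integral_eq_integral(1) by blast
  then have "(\<lambda>x. (c * x + d) - h x) integrable_on {a..b}"
    using assms(1) by (rule integrable_diff)
  then have D: "(\<lambda>x. (c * x + d) - h x) absolutely_integrable_on {a..b}"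
    using assms(2) by (intro nonnegative_absolutely_integrable_1) auto
  have "(\<lambda>x. (c * x + d) - ((c * x + d) - h x)) absolutely_integrable_on {a..b}"
    using set_integral_diff(1)[OF C D] .
  then show ?thesis by simp
qed

lemma poly_int:
  fixes a b A B C D :: real
  assumes "a < b"
  defines "L \<equiv> b - a"
  shows "((\<lambda>x. (A / L * (x - a) + B / L * (b - x)) * (C / L * (x - a) + D / L * (b - x)))
     has_integral L * (A * C / 3 + B * D / 3 + (A * D + B * C) / 6)) {a..b}"
proof -
  define P where "P x = (A * C * (x - a)^3 / 3 - B * D * (b - x)^3 / 3
      + (A * D + B * C) * (L * (x - a)^2 / 2 - (x - a)^3 / 3)) * (1 / L^2)" for x
  have "\<And>x. (P has_real_derivative
      (A / L * (x - a) + B / L * (b - x)) * (C / L * (x - a) + D / L * (b - x))) (at x within {a..b})"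
  proof -
    fix x
    have L: "L \<noteq> 0" using assms by (simp add: L_def)
    show "(P has_real_derivative
      (A / L * (x - a) + B / L * (b - x)) * (C / L * (x - a) + D / L * (b - x))) (at x within {a..b})"
    proof (rule DERIV_cong)
      show "(P has_real_derivative
        (A * C * (x - a)^2 + B * D * (b - x)^2 + (A * D + B * C) * (L * (x - a) - (x - a)^2)) * (1 / L^2))
        (at x within {a..b})"
        unfolding P_def[abs_def]
        apply (auto intro!: derivative_eq_intros)
        using L apply (simp add: field_simps power2_eq_square eval_nat_numeral)
        using L apply (simp add: power2_eq_square eval_nat_numeral divide_simps)
        done
      show "(A * C * (x - a)^2 + B * D * (b - x)^2 + (A * D + B * C) * (L * (x - a) - (x - a)^2)) * (1 / L^2)
        = (A / L * (x - a) + B / L * (b - x)) * (C / L * (x - a) + D / L * (b - x))"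
      proof -
        have e1: "A / L * (x - a) + B / L * (b - x) = (A*(x-a)+B*(b-x))/L"
          using L by (simp add: field_simps)
        have e2: "C / L * (x - a) + D / L * (b - x) = (C*(x-a)+D*(b-x))/L"
          using L by (simp add: field_simps)
        have e3: "A * C * (x - a)^2 + B * D * (b - x)^2 + (A * D + B * C) * (L * (x - a) - (x - a)^2)
            = (A*(x-a)+B*(b-x))*(C*(x-a)+D*(b-x))"
          unfolding L_def by (simp add: power2_eq_square algebra_simps)
        show ?thesis unfolding e1 e2 e3 by (simp add: power2_eq_square)
      qed
    qed
  qed
  then have "((\<lambda>x. (A / L * (x - a) + B / L * (b - x)) * (C / L * (x - a) + D / L * (b - x)))
     has_integral P b - P a) {a..b}"
    using assms by (intro fundamental_theorem_of_calculus) (auto simp: has_real_derivative_iff_has_vector_derivative)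
  moreover have "P b - P a = L * (A * C / 3 + B * D / 3 + (A * D + B * C) / 6)"
  proof -
    have bL: "b - a = L" and L: "L \<noteq> 0" using assms by (auto simp: L_def)
    show ?thesis unfolding P_def using L by (simp add: bL field_simps power2_eq_square power3_eq_cube)
  qed
  ultimately show ?thesis by simp
qed


theorem theorem4:
  fixes f g :: "real \<Rightarrow> real" and K m1 m2 a b :: real
  assumes "K > 0"
    and "m1 \<in> {0<..1}" and "m2 \<in> {0<..1}"
    and "m_convex_on m1 K f" and "m_convex_on m2 K g"
    and "0 \<le> a" and "a < b" and "b \<le> K"
    and "a / m1 \<le> K" and "a / m2 \<le> K"
    and "f integrable_on {a..b}" and "g integrable_on {a..b}"
    and "(\<lambda>x. f x * g x) integrable_on {a..b}"
  shows "g b / (b - a)^2 * integral {a..b} (\<lambda>x. (x - a) * f x)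
         + m2 * g (a / m2) / (b - a)^2 * integral {a..b} (\<lambda>x. (b - x) * f x)
         + f b / (b - a)^2 * integral {a..b} (\<lambda>x. (x - a) * g x)
         + m1 * f (a / m1) / (b - a)^2 * integral {a..b} (\<lambda>x. (b - x) * g x)
       \<le> 1 / (b - a) * integral {a..b} (\<lambda>x. f x * g x)
         + 1/3 * f b * g b
         + m1 / 6 * f (a / m1) * g b
         + m2 / 6 * f b * g (a / m2)
         + m1 * m2 / 3 * f (a / m1) * g (a / m2)"
proof -
  define L where "L = b - a"
  have L: "L > 0" using assms by (simp add: L_def)
  define A where "A = f b"
  define B where "B = m1 * f (a / m1)"
  define C where "C = g b"
  define D where "D = m2 * g (a / m2)"
  define F where "F x = A / L * (x - a) + B / L * (b - x)" for x
  define G where "G x = C / L * (x - a) + D / L * (b - x)" for x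
  have fF: "f x \<le> F x" if "x \<in> {a..b}" for x
  proof -
    have "f x \<le> (x - a) / (b - a) * f b + m1 * (1 - (x - a) / (b - a)) * f (a / m1)"
      using mconv_pt[OF assms(4) assms(2) assms(6) assms(7) assms(8) assms(9) that] .
    also have "\<dots> = F x"
      unfolding F_def A_def B_def using L by (simp add: L_def field_simps)
    finally show ?thesis .
  qed
  have gG: "g x \<le> G x" if "x \<in> {a..b}" for x
  proof -
    have "g x \<le> (x - a) / (b - a) * g b + m2 * (1 - (x - a) / (b - a)) * g (a / m2)"
      using mconv_pt[OF assms(5) assms(3) assms(6) assms(7) assms(8) assms(10) that] .
    also have "\<dots> = G x"
      unfolding G_def C_def D_def using L by (simp add: L_def field_simps)
    finally show ?thesis .
  qed
  have fab: "f absolutely_integrable_on {a..b}"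
  proof (rule abs_int_of_bound[OF assms(11), of "(A - B) / L" "(B * b - A * a) / L"])
    fix x assume "x \<in> {a..b}"
    then have "f x \<le> F x" by (rule fF)
    also have "F x = (A - B) / L * x + (B * b - A * a) / L"
      unfolding F_def using L by (simp add: field_simps)
    finally show "f x \<le> (A - B) / L * x + (B * b - A * a) / L" .
  qed
  have gab: "g absolutely_integrable_on {a..b}"
  proof (rule abs_int_of_bound[OF assms(12), of "(C - D) / L" "(D * b - C * a) / L"])
    fix x assume "x \<in> {a..b}"
    then have "g x \<le> G x" by (rule gG)
    also have "G x = (C - D) / L * x + (D * b - C * a) / L"
      unfolding G_def using L by (simp add: field_simps)
    finally show "g x \<le> (C - D) / L * x + (D * b - C * a) / L" .
  qed
  have i1: "(\<lambda>x. (x - a) * f x) integrable_on {a..b}"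
    using affine_prod_int[OF fab, of 1 "-a"] by simp
  have i2: "(\<lambda>x. (b - x) * f x) integrable_on {a..b}"
    using affine_prod_int[OF fab, of "-1" b] by simp
  have j1: "(\<lambda>x. (x - a) * g x) integrable_on {a..b}"
    using affine_prod_int[OF gab, of 1 "-a"] by simp
  have j2: "(\<lambda>x. (b - x) * g x) integrable_on {a..b}"
    using affine_prod_int[OF gab, of "-1" b] by simp
  define I1 where "I1 = integral {a..b} (\<lambda>x. (x - a) * f x)"
  define I2 where "I2 = integral {a..b} (\<lambda>x. (b - x) * f x)"
  define J1 where "J1 = integral {a..b} (\<lambda>x. (x - a) * g x)"
  define J2 where "J2 = integral {a..b} (\<lambda>x. (b - x) * g x)"
  define P where "P = integral {a..b} (\<lambda>x. f x * g x)"
  define Q where "Q = L * (A * C / 3 + B * D / 3 + (A * D + B * C) / 6)"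
  have hl: "((\<lambda>x. F x * g x + f x * G x) has_integral
      (A / L * J1 + B / L * J2 + (C / L * I1 + D / L * I2))) {a..b}"
  proof -
    have "((\<lambda>x. A / L * ((x - a) * g x) + B / L * ((b - x) * g x)
           + (C / L * ((x - a) * f x) + D / L * ((b - x) * f x))) has_integral
      (A / L * J1 + B / L * J2 + (C / L * I1 + D / L * I2))) {a..b}"
      unfolding I1_def I2_def J1_def J2_def
      by (intro has_integral_add has_integral_mult_right integrable_integral i1 i2 j1 j2)
    moreover have "\<And>x. A / L * ((x - a) * g x) + B / L * ((b - x) * g x)
           + (C / L * ((x - a) * f x) + D / L * ((b - x) * f x)) = F x * g x + f x * G x"
      unfolding F_def G_def using L by (simp add: field_simps)
    ultimately show ?thesis by simp
  qed
  have hr: "((\<lambda>x. f x * g x + F x * G x) has_integral (P + Q)) {a..b}"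
    unfolding P_def Q_def F_def G_def L_def
    by (intro has_integral_add integrable_integral assms(13) poly_int assms(7))
  have pt: "F x * g x + f x * G x \<le> f x * g x + F x * G x" if "x \<in> {a..b}" for x
  proof -
    have "0 \<le> (F x - f x) * (G x - g x)" using fF[OF that] gG[OF that] by simp
    then show ?thesis by (simp add: algebra_simps)
  qed
  have main: "A / L * J1 + B / L * J2 + (C / L * I1 + D / L * I2) \<le> P + Q"
    using has_integral_le[OF hl hr] pt by blast
  have "C / L^2 * I1 + D / L^2 * I2 + A / L^2 * J1 + B / L^2 * J2
      = (A / L * J1 + B / L * J2 + (C / L * I1 + D / L * I2)) / L"
    using L by (simp add: field_simps power2_eq_square)
  also have "\<dots> \<le> (P + Q) / L" using main L by (simp add: divide_right_mono)
  also have "\<dots> = 1 / L * P + 1/3 * A * C + 1/6 * B * C + 1/6 * A * D + 1/3 * B * D"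
    unfolding Q_def using L by (simp add: field_simps)
  finally show ?thesis
    unfolding I1_def I2_def J1_def J2_def P_def A_def B_def C_def D_def L_def
    by (simp add: algebra_simps)
qed

end
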